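(* Let $X$ be a metrizable space and let $\mathcal{K}$ be the ideal of all closed compact subsets of $X$. If $C(X)_\mathcal{K}$ is closed under uniform limits (i.e. whenever a sequence in $C(X)_\mathcal{K}$ converges uniformly on $X$ to some $f\in\mathbb{R}^X$, then $f\in C(X)_\mathcal{K}$), then the set of all non-isolated points of $X$ is a member of $\mathcal{K}$.
   Context: For $f\in\mathbb{R}^X$, $D_f$ denotes the set of points of discontinuity of $f$. For an ideal $\mathcal{P}$ of closed subsets of $X$ (a family of closed sets closed under finite unions and under passing to closed subsets), $C(X)_\mathcal{P}=\{f\in\mathbb{R}^X\colon \overline{D_f}\in\mathcal{P}\}$. *)

theory Defs
  imports "HOL-Analysis.Analysis"
begin

definition discont_points :: "'a topology \<Rightarrow> ('a \<Rightarrow> real) \<Rightarrow> 'a set" where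
  "discont_points X f = {x \<in> topspace X.
      \<not> (\<forall>e>0. \<exists>U. openin X U \<and> x \<in> U \<and> (\<forall>y\<in>U. \<bar>f y - f x\<bar> < e))}"

definition compact_ideal :: "'a topology \<Rightarrow> 'a set set" where
  "compact_ideal X = {K. K \<subseteq> topspace X \<and> closedin X K \<and> compactin X K}"

definition C_ideal :: "'a topology \<Rightarrow> 'a set set \<Rightarrow> ('a \<Rightarrow> real) set" where
  "C_ideal X P = {f. X closure_of (discont_points X f) \<in> P}"

definition unif_conv_on :: "'a topology \<Rightarrow> (nat \<Rightarrow> 'a \<Rightarrow> real) \<Rightarrow> ('a \<Rightarrow> real) \<Rightarrow> bool" where
  "unif_conv_on X g f \<longleftrightarrow>
     (\<forall>e>0. \<exists>N. \<forall>n\<ge>N. \<forall>x\<in>topspace X. \<bar>g n x - f x\<bar> < e)"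

end

theory Submission
  imports Defs
begin

lemma discont_points_char:
  assumes T: "T \<subseteq> X derived_set_of topspace X"
    and D: "X derived_set_of T = {}"
    and h: "\<And>x. x \<in> T \<longleftrightarrow> h x \<noteq> 0"
  shows "discont_points X h = T"
proof
  show "discont_points X h \<subseteq> T"
  proof
    fix y assume y: "y \<in> discont_points X h"
    show "y \<in> T"
    proof (rule ccontr)
      assume yT: "y \<notin> T"
      have yt: "y \<in> topspace X" using y by (simp add: discont_points_def)
      have "y \<notin> X derived_set_of T" using D by simp
      then have "\<not> (\<forall>V. y \<in> V \<and> openin X V \<longrightarrow> (\<exists>z. z \<noteq> y \<and> z \<in> T \<and> z \<in> V))"
        using yt unfolding in_derived_set_of by blast
      then obtain U where U: "y \<in> U" "openin X U" "\<And>z. z \<noteq> y \<Longrightarrow> z \<in> T \<Longrightarrow> z \<notin> U"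
        by blast
      have hU: "\<forall>z\<in>U. h z = 0"
      proof
        fix z assume zU: "z \<in> U"
        have "z \<notin> T" using U(3)[of z] zU yT by (cases "z = y") auto
        then show "h z = 0" using h[of z] by simp
      qed
      have "\<forall>e>0. \<exists>U. openin X U \<and> y \<in> U \<and> (\<forall>z\<in>U. \<bar>h z - h y\<bar> < e)"
      proof (intro allI impI)
        fix e :: real assume "e > 0"
        then have "\<forall>z\<in>U. \<bar>h z - h y\<bar> < e" using hU U(1) by simp
        then show "\<exists>U. openin X U \<and> y \<in> U \<and> (\<forall>z\<in>U. \<bar>h z - h y\<bar> < e)"
          using U(1,2) by blast
      qed
      then show False using y unfolding discont_points_def mem_Collect_eq by blast
    qed
  qed
next
  show "T \<subseteq> discont_points X h"
  proof
    fix y assume yT: "y \<in> T"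
    have yt: "y \<in> topspace X"
      using subsetD[OF derived_set_of_subset_topspace[of X "topspace X"] subsetD[OF T yT]] .
    have "y \<notin> X derived_set_of T" using D by simp
    then have "\<not> (\<forall>V. y \<in> V \<and> openin X V \<longrightarrow> (\<exists>z. z \<noteq> y \<and> z \<in> T \<and> z \<in> V))"
      using yt unfolding in_derived_set_of by blast
    then obtain U where U: "y \<in> U" "openin X U" "\<And>z. z \<noteq> y \<Longrightarrow> z \<in> T \<Longrightarrow> z \<notin> U"
      by blast
    have hy: "h y \<noteq> 0" using yT h by blast
    have "\<not> (\<exists>V. openin X V \<and> y \<in> V \<and> (\<forall>z\<in>V. \<bar>h z - h y\<bar> < \<bar>h y\<bar>))"
    proof
      assume "\<exists>V. openin X V \<and> y \<in> V \<and> (\<forall>z\<in>V. \<bar>h z - h y\<bar> < \<bar>h y\<bar>)"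
      then obtain V where V: "openin X V" "y \<in> V" "\<forall>z\<in>V. \<bar>h z - h y\<bar> < \<bar>h y\<bar>" by blast
      have "y \<in> X derived_set_of topspace X" using yT T by blast
      moreover have "openin X (U \<inter> V)" using U(2) V(1) by (rule openin_Int)
      moreover have "y \<in> U \<inter> V" using U(1) V(2) by blast
      ultimately obtain z where z: "z \<noteq> y" "z \<in> U \<inter> V"
        unfolding in_derived_set_of by blast
      then have "z \<notin> T" using U by blast
      then have "h z = 0" using h by blast
      then show False using V z by auto
    qed
    then have "\<not> (\<forall>e>0. \<exists>V. openin X V \<and> y \<in> V \<and> (\<forall>z\<in>V. \<bar>h z - h y\<bar> < e))"
      using hy by (metis zero_less_abs_iff)
    then show "y \<in> discont_points X h"
      using yt unfolding discont_points_def by blast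
  qed
qed

lemma C_ideal_char:
  assumes T: "T \<subseteq> X derived_set_of topspace X"
    and D: "X derived_set_of T = {}"
    and h: "\<And>x. x \<in> T \<longleftrightarrow> h x \<noteq> 0"
  shows "h \<in> C_ideal X (compact_ideal X) \<longleftrightarrow> compactin X T"
proof -
  have Tt: "T \<subseteq> topspace X" using T derived_set_of_subset_topspace[of X "topspace X"] by (rule order_trans)
  have "X derived_set_of T \<subseteq> T" using D by simp
  then have "closedin X T" unfolding closedin_contains_derived_set using Tt by blast
  then have "X closure_of T = T" by (rule closure_of_closedin)
  moreover have "discont_points X h = T" by (rule discont_points_char[OF T D h])
  ultimately show ?thesis unfolding C_ideal_def compact_ideal_def mem_Collect_eq
    using Tt \<open>closedin X T\<close> by auto
qed

theorem theorem3p2: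
  fixes X :: "'a topology"
  assumes "metrizable_space X"
    and "\<And>g f. (\<forall>n. g n \<in> C_ideal X (compact_ideal X)) \<Longrightarrow> unif_conv_on X g f
             \<Longrightarrow> f \<in> C_ideal X (compact_ideal X)"
  shows "X derived_set_of (topspace X) \<in> compact_ideal X"
proof -
  let ?X' = "X derived_set_of (topspace X)"
  have cl: "closedin X ?X'"
    by (simp add: assms(1) closedin_derived_set_of metrizable_imp_Hausdorff_space)
  have sub: "?X' \<subseteq> topspace X" by (rule derived_set_of_subset_topspace)
  have "compactin X ?X'"
  proof (rule ccontr)
    assume nc: "\<not> compactin X ?X'"
    obtain M d where Md: "Metric_space M d" "X = Metric_space.mtopology M d"
      using assms(1) metrizable_space_def by blast
    have e: "Metric_space.mtopology M d = X" using Md(2) by (rule sym)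
    have tM: "M = topspace X"
      using Metric_space.topspace_mtopology[OF Md(1)] unfolding e by (rule sym)
    have BW: "compactin X S \<longleftrightarrow> S \<subseteq> topspace X \<and> (\<forall>T. T \<subseteq> S \<and> infinite T \<longrightarrow> S \<inter> X derived_set_of T \<noteq> {})" for S
      using Metric_space.compactin_eq_Bolzano_Weierstrass[OF Md(1), of S]
      unfolding e unfolding tM .
    obtain T where T: "T \<subseteq> ?X'" "infinite T" "?X' \<inter> X derived_set_of T = {}"
    proof -
      have "\<not> (\<forall>T. T \<subseteq> ?X' \<and> infinite T \<longrightarrow> ?X' \<inter> X derived_set_of T \<noteq> {})"
        using nc sub BW[of ?X'] by (simp only: simp_thms)
      then show ?thesis using that by blast
    qed
    have "X derived_set_of T \<subseteq> ?X'"
      using derived_set_of_mono[of T "topspace X" X] T(1) sub by (meson order_trans)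
    then have DT: "X derived_set_of T = {}" using T(3) by blast
    obtain f :: "nat \<Rightarrow> 'a" where f: "inj f" "range f \<subseteq> T"
      using infinite_countable_subset[OF T(2)] by blast
    define S where "S = range f"
    have DS: "X derived_set_of S = {}"
      using DT derived_set_of_mono[OF f(2), of X] unfolding S_def by blast
    have SX: "S \<subseteq> ?X'" using f T unfolding S_def by blast
    define w where "w x = (if x \<in> S then 1 / real (Suc (inv f x)) else 0)" for x
    define g where "g k x = (if x \<in> f ` {..<k} then w x else 0)" for k x
    have wf: "w (f n) = 1 / real (Suc n)" for n
      using f(1) by (simp add: w_def S_def)
    have "\<forall>k. g k \<in> C_ideal X (compact_ideal X)"
    proof
      fix k
      have sk: "f ` {..<k} \<subseteq> ?X'" using SX unfolding S_def by blast
      have dk: "X derived_set_of (f ` {..<k}) = {}"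
        using DS derived_set_of_mono[of "f ` {..<k}" S X] unfolding S_def by blast
      have hk: "x \<in> f ` {..<k} \<longleftrightarrow> g k x \<noteq> 0" for x
        using wf by (auto simp: g_def)
      show "g k \<in> C_ideal X (compact_ideal X)"
        using C_ideal_char[OF sk dk hk] sk sub
        by (meson finite_imageI finite_lessThan finite_imp_compactin order_trans)
    qed
    moreover have "unif_conv_on X g w"
      unfolding unif_conv_on_def
    proof (intro allI impI)
      fix e :: real assume e: "e > 0"
      obtain N :: nat where N: "1 / real (Suc N) < e"
        using e by (metis nat_approx_posE)
      have "\<forall>n\<ge>N. \<forall>x. \<bar>g n x - w x\<bar> < e"
      proof (intro allI impI)
        fix n x assume n: "N \<le> n"
        show "\<bar>g n x - w x\<bar> < e"
        proof (cases "x \<in> f ` {..<n}")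
          case True then show ?thesis using e by (simp add: g_def)
        next
          case False
          show ?thesis
          proof (cases "x \<in> S")
            case True
            then obtain m where m: "x = f m" unfolding S_def by blast
            with False have "m \<ge> n" by auto
            then have "1 / real (Suc m) \<le> 1 / real (Suc N)"
              using n by (simp add: frac_le)
            then show ?thesis using False m wf N by (simp add: g_def)
          next
            case False
            then show ?thesis using e by (simp add: g_def w_def S_def)
          qed
        qed
      qed
      then show "\<exists>N. \<forall>n\<ge>N. \<forall>x\<in>topspace X. \<bar>g n x - w x\<bar> < e" by blast
    qed
    ultimately have wC: "w \<in> C_ideal X (compact_ideal X)" by (rule assms(2))
    have hw: "x \<in> S \<longleftrightarrow> w x \<noteq> 0" for x by (simp add: w_def)
    have cS: "compactin X S" using C_ideal_char[OF SX DS hw] wC by (rule iffD1)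
    have iS: "infinite S" using f(1) unfolding S_def by (rule range_inj_infinite)
    have "S \<inter> X derived_set_of S \<noteq> {}"
      using compactin_imp_Bolzano_Weierstrass[OF cS, of S] iS by blast
    then show False using DS by simp
  qed
  then show ?thesis using cl sub by (simp add: compact_ideal_def)
qed

end
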